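(* For all $n\ge0$, \[\sum_{k=0}^n\binom{n}{k}P_{\mathcal{B}_k}(z)P_{\mathcal{B}_{n-k}}(z)=2^nP_{\mathcal{A}_{n+1}}(z).\]
   Context: $\mathcal{A}_m$ is the braid arrangement in $\mathbb{R}^m$ (hyperplanes $x_i=x_j$, $i<j$); $\mathcal{B}_m$ is the arrangement in $\mathbb{R}^m$ of hyperplanes $x_i=\pm x_j$ ($i<j$) and $x_i=0$, with $P_{\mathcal{B}_0}=1$. For an arrangement $\mathcal{A}$, $P_{\mathcal{A}}(z)=\sum_{\mathrm{X}}|\mu(\bot,\mathrm{X})|(z-1)^{\operatorname{codim}\mathrm{X}}$, summed over flats, $\mu$ the Möbius function of the lattice of flats under inclusion, $\bot$ its minimum. *)

theory Defs
  imports Complex_Main "HOL-Library.Function_Algebras" "HOL-Computational_Algebra.Polynomial"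
begin

text \<open>Points of R^m are modelled as functions nat => real vanishing at all
  coordinates i >= m (coordinates are indexed 0..m-1).\<close>

type_synonym pt = "nat \<Rightarrow> real"

definition ambient :: "nat \<Rightarrow> pt set" where
  "ambient m = {x. \<forall>i\<ge>m. x i = 0}"

definition fscale :: "real \<Rightarrow> pt \<Rightarrow> pt" where
  "fscale c x = (\<lambda>i. c * x i)"

definition codim :: "nat \<Rightarrow> pt set \<Rightarrow> nat" where
  "codim m X = m - vector_space.dim fscale X"

definition braid_arr :: "nat \<Rightarrow> pt set set" where
  "braid_arr m = {{x \<in> ambient m. x i = x j} | i j. i < j \<and> j < m}"

definition typeB_arr :: "nat \<Rightarrow> pt set set" where
  "typeB_arr m =
     {{x \<in> ambient m. x i = x j} | i j. i < j \<and> j < m} \<union>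
     {{x \<in> ambient m. x i = - x j} | i j. i < j \<and> j < m} \<union>
     {{x \<in> ambient m. x i = 0} | i. i < m}"

definition flats :: "nat \<Rightarrow> pt set set \<Rightarrow> pt set set" where
  "flats m A = {ambient m \<inter> \<Inter>S | S. S \<subseteq> A}"

definition flat_bot :: "nat \<Rightarrow> pt set set \<Rightarrow> pt set" where
  "flat_bot m A = ambient m \<inter> \<Inter>A"

definition mobius :: "'a set \<Rightarrow> ('a \<Rightarrow> 'a \<Rightarrow> bool) \<Rightarrow> 'a \<Rightarrow> 'a \<Rightarrow> int" where
  "mobius P le = (THE mu. \<forall>a b. mu a b =
      (if a \<in> P \<and> b \<in> P then
         (if a = b then 1
          else if le a b then - (\<Sum>c\<in>{c \<in> P. le a c \<and> le c b \<and> c \<noteq> b}. mu a c)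
          else 0)
       else 0))"

definition arr_poly :: "nat \<Rightarrow> pt set set \<Rightarrow> real poly" where
  "arr_poly m A = (\<Sum>X\<in>flats m A.
      smult (real_of_int \<bar>mobius (flats m A) (\<subseteq>) (flat_bot m A) X\<bar>) ([:-1, 1:] ^ codim m X))"

end

theory Submission
  imports Defs
begin

lemma nat_int_p1[simp]: "nat (int k + 1) = Suc k" by arith
lemma nat_int_p1'[simp]: "nat (1 + int k) = Suc k" by arith

lemma abs_sgn_mult[simp]: "a \<noteq> 0 \<Longrightarrow> \<bar>sgn a * (x::int)\<bar> = \<bar>x\<bar>"
  by (cases "a > 0") (auto simp: abs_mult)

definition mx :: "int list \<Rightarrow> nat" where
  "mx c = Max (insert 0 (set (map (\<lambda>a. nat \<bar>a\<bar>) c)))"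

lemma mx_Nil[simp]: "mx [] = 0" by (simp add: mx_def)

lemma mx_snoc[simp]: "mx (c @ [a]) = max (mx c) (nat \<bar>a\<bar>)"
proof -
  have e: "insert 0 (set (map (\<lambda>a. nat \<bar>a\<bar>) (c @ [a]))) = insert (nat \<bar>a\<bar>) (insert 0 (set (map (\<lambda>a. nat \<bar>a\<bar>) c)))"
    by auto
  show ?thesis unfolding mx_def e
    using Max_insert[of "insert 0 (set (map (\<lambda>a. nat \<bar>a\<bar>) c))" "nat \<bar>a\<bar>"]
    by (simp add: max.commute)
qed

lemma mx_ge: "x \<in> set c \<Longrightarrow> nat \<bar>x\<bar> \<le> mx c"
  by (simp add: mx_def)

lemma mx_nth: "i < length c \<Longrightarrow> nat \<bar>c ! i\<bar> \<le> mx c"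
  by (rule mx_ge) simp

lemma mx_take_nth: "i < k \<Longrightarrow> i < length h \<Longrightarrow> nat \<bar>h ! i\<bar> \<le> mx (take k h)"
  by (rule mx_ge) (simp add: in_set_conv_nth, rule exI[of _ i], simp)

lemma mx_eqI: "(\<forall>x\<in>set c. nat \<bar>x\<bar> \<le> n) \<Longrightarrow> (n = 0 \<or> (\<exists>x\<in>set c. nat \<bar>x\<bar> = n)) \<Longrightarrow> mx c = n"
  unfolding mx_def by (rule antisym) (auto intro!: Max_ge)

definition allowed :: "bool \<Rightarrow> nat \<Rightarrow> int \<Rightarrow> bool" where
  "allowed B d a \<longleftrightarrow> a = int d + 1 \<or> (if B then \<bar>a\<bar> \<le> int d else 1 \<le> a \<and> a \<le> int d)"

inductive can :: "bool \<Rightarrow> int list \<Rightarrow> bool" for B where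
  can_Nil: "can B []"
| can_snoc: "can B c \<Longrightarrow> allowed B (mx c) a \<Longrightarrow> can B (c @ [a])"

lemma can_snoc_iff: "can B (c @ [a]) \<longleftrightarrow> can B c \<and> allowed B (mx c) a"
  by (auto intro: can_snoc elim: can.cases)

lemma can_nth_iff: "can B c \<longleftrightarrow> (\<forall>i<length c. allowed B (mx (take i c)) (c ! i))"
proof (induction c rule: rev_induct)
  case Nil then show ?case by (simp add: can_Nil)
next
  case (snoc a c)
  show ?case
    unfolding can_snoc_iff snoc.IH
    by (auto simp: nth_append less_Suc_eq)
qed

lemma can_take: "can B c \<Longrightarrow> can B (take k c)"
  by (auto simp: can_nth_iff)

lemma can_mx_le: "can B c \<Longrightarrow> mx c \<le> length c"
  by (induction rule: can.induct) (auto simp: allowed_def split: if_splits)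

lemma can_pos: "can False c \<Longrightarrow> i < length c \<Longrightarrow> c ! i \<ge> 1"
  by (induction rule: can.induct) (auto simp: allowed_def nth_append less_Suc_eq)

lemma can_nonzero_le: "can B c \<Longrightarrow> i < length c \<Longrightarrow> B \<or> c ! i \<ge> 1"
  using can_pos by (cases B) auto

lemma can_occurs: "can B c \<Longrightarrow> 1 \<le> k \<Longrightarrow> k \<le> mx c \<Longrightarrow> \<exists>i<length c. c ! i = int k"
proof (induction rule: can.induct)
  case can_Nil then show ?case by simp
next
  case (can_snoc c a)
  show ?case
  proof (cases "k \<le> mx c")
    case True
    then obtain i where "i < length c" "c ! i = int k" using can_snoc by auto
    then show ?thesis by (intro exI[of _ i]) (auto simp: nth_append)
  next
    case False
    then have "a = int k" using can_snoc by (auto simp: allowed_def split: if_splits)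
    then show ?thesis by (intro exI[of _ "length c"]) auto
  qed
qed

definition lcomp :: "int list \<Rightarrow> int list \<Rightarrow> int list" where
  "lcomp c h = map (\<lambda>a. sgn a * h ! (nat \<bar>a\<bar> - 1)) c"

lemma lcomp_can:
  assumes "can B c" "can B h" "mx c \<le> length h"
  shows "can B (lcomp c h) \<and> mx (lcomp c h) = mx (take (mx c) h)"
  using assms
proof (induction rule: can.induct)
  case can_Nil then show ?case by (simp add: lcomp_def can.can_Nil)
next
  case (can_snoc c a)
  have le: "mx c \<le> length h" using can_snoc.prems by simp
  with can_snoc.IH can_snoc.prems have IH: "can B (lcomp c h)" "mx (lcomp c h) = mx (take (mx c) h)" by auto
  define b where "b = sgn a * h ! (nat \<bar>a\<bar> - 1)"
  have cs: "lcomp (c @ [a]) h = lcomp c h @ [b]" by (simp add: lcomp_def b_def)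
  show ?case
  proof (cases "a = int (mx c) + 1")
    case True
    have "nat (int (mx c) + 1) - 1 = mx c" by simp
    then have b: "b = h ! mx c" using True by (simp add: b_def)
    have lt: "mx c < length h" using can_snoc.prems True by simp
    have al: "allowed B (mx (take (mx c) h)) (h ! mx c)"
      using can_snoc.prems(1) lt by (simp add: can_nth_iff)
    have tk: "take (mx (c @ [a])) h = take (mx c) h @ [h ! mx c]"
      using True lt by (simp add: take_Suc_conv_app_nth)
    show ?thesis unfolding cs tk using IH al b by (simp add: can_snoc_iff)
  next
    case False
    then have old: "if B then \<bar>a\<bar> \<le> int (mx c) else 1 \<le> a \<and> a \<le> int (mx c)"
      using can_snoc.hyps by (simp add: allowed_def)
    have mxa: "mx (c @ [a]) = mx c" using old by (auto split: if_splits)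
    have "allowed B (mx (take (mx c) h)) b \<and> nat \<bar>b\<bar> \<le> mx (take (mx c) h)"
    proof (cases "a = 0")
      case True
      then show ?thesis using old by (auto simp: b_def allowed_def split: if_splits)
    next
      case False
      define p where "p = nat \<bar>a\<bar> - 1"
      have p: "p < mx c" using old False by (auto simp: p_def split: if_splits)
      then have pl: "p < length h" using le by simp
      have bb: "nat \<bar>b\<bar> = nat \<bar>h ! p\<bar>" using False by (simp add: b_def p_def)
      have hp: "nat \<bar>h ! p\<bar> \<le> mx (take (mx c) h)" using mx_take_nth[OF p pl] .
      show ?thesis
      proof (cases B)
        case True
        then show ?thesis using bb hp by (simp add: allowed_def) linarith
      next
        case nB: False
        then have "a \<ge> 1" using old by simp
        then have "b = h ! p" by (simp add: b_def p_def)
        moreover have "h ! p \<ge> 1" using can_pos[of h p] can_snoc.prems(1) nB pl by simp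
        ultimately show ?thesis using bb hp nB by (simp add: allowed_def) linarith
      qed
    qed
    then show ?thesis unfolding cs mxa using IH by (auto simp: can_snoc_iff)
  qed
qed

lemma can_map_upt:
  assumes "\<And>k. k < n \<Longrightarrow> allowed B (mx (map g [0..<k])) (g k)"
  shows "can B (map g [0..<n])"
  using assms
proof (induction n)
  case 0 show ?case by (simp add: can.can_Nil)
next
  case (Suc n) then show ?case by (simp add: can.can_snoc)
qed

definition heq :: "nat \<Rightarrow> nat \<Rightarrow> nat \<Rightarrow> pt set" where "heq m i j = {x \<in> ambient m. x i = x j}"
definition hng :: "nat \<Rightarrow> nat \<Rightarrow> nat \<Rightarrow> pt set" where "hng m i j = {x \<in> ambient m. x i = - x j}"
definition hz :: "nat \<Rightarrow> nat \<Rightarrow> pt set" where "hz m i = {x \<in> ambient m. x i = 0}"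

definition arr :: "bool \<Rightarrow> nat \<Rightarrow> pt set set" where
  "arr B m = (if B then typeB_arr m else braid_arr m)"

lemma arr_iff: "H \<in> arr B m \<longleftrightarrow>
   (\<exists>i j. i < j \<and> j < m \<and> (H = heq m i j \<or> (B \<and> H = hng m i j))) \<or> (B \<and> (\<exists>i<m. H = hz m i))"
  unfolding arr_def typeB_arr_def braid_arr_def heq_def hng_def hz_def by auto

lemma arr_finite: "finite (arr B m)"
proof -
  have "arr B m \<subseteq> (\<lambda>(i,j). heq m i j) ` ({..<m} \<times> {..<m}) \<union> (\<lambda>(i,j). hng m i j) ` ({..<m} \<times> {..<m})
     \<union> hz m ` {..<m}"
  proof
    fix H assume "H \<in> arr B m"
    then show "H \<in> (\<lambda>(i,j). heq m i j) ` ({..<m} \<times> {..<m}) \<union> (\<lambda>(i,j). hng m i j) ` ({..<m} \<times> {..<m})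
     \<union> hz m ` {..<m}"
      unfolding arr_iff
    proof (elim disjE exE conjE)
      fix i j assume "i < j" "j < m" "H = heq m i j"
      then show ?thesis by (intro UnI1 image_eqI[of _ _ "(i,j)"]) auto
    next
      fix i j assume "i < j" "j < m" "B" "H = hng m i j"
      then show ?thesis by (intro UnI1 UnI2 image_eqI[of _ _ "(i,j)"]) auto
    next
      fix i assume "B" "i < m" "H = hz m i"
      then show ?thesis by (intro UnI2 image_eqI[of _ _ i]) auto
    qed
  qed
  then show ?thesis by (rule finite_subset) auto
qed

lemma arr_mono_sub: "H \<in> arr B m \<Longrightarrow> H \<subseteq> ambient m"
  unfolding arr_iff heq_def hng_def hz_def by auto

lemma heq_sym: "heq m i j = heq m j i" unfolding heq_def by auto
lemma hng_sym: "hng m i j = hng m j i" unfolding hng_def by auto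

lemma arr_rel:
  assumes "i \<noteq> j" "i < m" "j < m" "s = 1 \<or> (B \<and> s = -1)"
  shows "{x \<in> ambient m. x i = s * x j} \<in> arr B m"
proof -
  have e1: "{x \<in> ambient m. x i = 1 * x j} = heq m (min i j) (max i j)"
    unfolding heq_def by (cases "i < j") (auto simp: min_def max_def)
  have e2: "{x \<in> ambient m. x i = -1 * x j} = hng m (min i j) (max i j)"
    unfolding hng_def by (cases "i < j") (auto simp: min_def max_def)
  have "min i j < max i j" "max i j < m" using assms by auto
  then show ?thesis using assms e1 e2 unfolding arr_iff by blast
qed

lemma hz_in: "B \<Longrightarrow> p < d \<Longrightarrow> hz d p \<in> arr B d"
  unfolding arr_iff by blast

lemma pair_set:
  fixes u v :: real
  assumes u: "u \<in> {-1,0,1}" and v: "v \<in> {-1,0,1}" and p: "u \<noteq> 0 \<Longrightarrow> p < d" and q: "v \<noteq> 0 \<Longrightarrow> q < d"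
    and A: "\<not> B \<Longrightarrow> u = 1 \<and> v = 1"
  shows "{y \<in> ambient d. u * y p = v * y q} \<in> insert (ambient d) (arr B d)"
proof (cases "u = 0")
  case True
  show ?thesis
  proof (cases "v = 0")
    case True
    then show ?thesis using \<open>u = 0\<close> by simp
  next
    case False
    then have "{y \<in> ambient d. u * y p = v * y q} = hz d q" using \<open>u = 0\<close> unfolding hz_def by auto
    moreover have "B" using A \<open>u = 0\<close> by auto
    ultimately show ?thesis using hz_in[of B q d] q False by simp
  qed
next
  case un: False
  show ?thesis
  proof (cases "v = 0")
    case True
    then have "{y \<in> ambient d. u * y p = v * y q} = hz d p" using un unfolding hz_def by auto
    moreover have "B" using A True by auto
    ultimately show ?thesis using hz_in[of B p d] p un by simp
  next
    case vn: False
    have uu: "u * u = 1" "v * v = 1" using u v un vn by auto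
    have eq: "u * y p = v * y q \<longleftrightarrow> y p = (u * v) * y q" for y :: pt
    proof
      assume "u * y p = v * y q"
      then have "u * (u * y p) = u * (v * y q)" by simp
      then show "y p = (u * v) * y q" using uu by (simp add: mult.assoc[symmetric])
    next
      assume "y p = (u * v) * y q"
      then show "u * y p = v * y q" using uu by (simp add: mult.assoc[symmetric])
    qed
    show ?thesis
    proof (cases "p = q")
      case True
      show ?thesis
      proof (cases "u = v")
        case True
        then show ?thesis using \<open>p = q\<close> by simp
      next
        case False
        then have uv: "u * v = -1" using u v un vn by auto
        have "{y \<in> ambient d. u * y p = v * y q} = {y \<in> ambient d. y p = (u * v) * y q}" using eq by blast
        also have "\<dots> = hz d p" using \<open>p = q\<close> uv unfolding hz_def by auto
        finally have "{y \<in> ambient d. u * y p = v * y q} = hz d p" .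
        moreover have "B" by (rule ccontr) (use A False in auto)
        ultimately show ?thesis using hz_in[of B p d] p un by simp
      qed
    next
      case False
      have "u * v = 1 \<or> (B \<and> u * v = -1)" by (cases B) (use u v un vn A in auto)
      then have "{y \<in> ambient d. y p = (u * v) * y q} \<in> arr B d"
        using arr_rel[OF False p[OF un] q[OF vn]] by blast
      then show ?thesis unfolding eq by simp
    qed
  qed
qed

definition Lc :: "int list \<Rightarrow> pt \<Rightarrow> pt" where
  "Lc c y = (\<lambda>i. if i < length c then of_int (sgn (c ! i)) * y (nat \<bar>c ! i\<bar> - 1) else 0)"

lemma Lc_amb: "Lc c y \<in> ambient (length c)"
  by (simp add: Lc_def ambient_def)

definition flatc :: "int list \<Rightarrow> pt set" where
  "flatc c = Lc c ` ambient (mx c)"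

lemma flatc_sub: "flatc c \<subseteq> ambient (length c)"
  using Lc_amb by (auto simp: flatc_def)

lemma Lc_comp:
  assumes "mx c \<le> length h"
  shows "Lc c (Lc h y) = Lc (lcomp c h) y"
proof
  fix i
  show "Lc c (Lc h y) i = Lc (lcomp c h) y i"
  proof (cases "i < length c \<and> c ! i \<noteq> 0")
    case True
    then have "nat \<bar>c ! i\<bar> - 1 < length h" using mx_nth[of i c] assms by auto
    then show ?thesis using True
      by (auto simp: Lc_def lcomp_def sgn_mult)
  next
    case False
    then show ?thesis by (auto simp: Lc_def lcomp_def)
  qed
qed

definition hsg :: "nat \<Rightarrow> nat \<Rightarrow> int \<Rightarrow> int list" where
  "hsg d b v = map (\<lambda>k. if k < b then int k + 1 else if k = b then v else int k) [0..<d]"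

lemma hsg_prefix_mx:
  assumes "k \<le> d" "b < d" "\<bar>v\<bar> \<le> int b"
  shows "mx (map (\<lambda>k. if k < b then int k + 1 else if k = b then v else int k) [0..<k]) = (if k \<le> b then k else k - 1)"
proof (rule mx_eqI)
  show "\<forall>x\<in>set (map (\<lambda>k. if k < b then int k + 1 else if k = b then v else int k) [0..<k]).
          nat \<bar>x\<bar> \<le> (if k \<le> b then k else k - 1)"
    using assms by auto
  show "(if k \<le> b then k else k - 1) = 0 \<or>
    (\<exists>x\<in>set (map (\<lambda>k. if k < b then int k + 1 else if k = b then v else int k) [0..<k]).
       nat \<bar>x\<bar> = (if k \<le> b then k else k - 1))"
  proof -
    let ?g = "\<lambda>k. if k < b then int k + 1 else if k = b then v else int k"
    have mem: "j < k \<Longrightarrow> ?g j \<in> set (map ?g [0..<k])" for j by auto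
    show ?thesis
    proof (cases "k \<le> b")
      case True
      show ?thesis
      proof (cases k)
        case (Suc k')
        then have "?g k' = int k" using True by simp
        then show ?thesis using mem[of k'] Suc True by (intro disjI2 bexI[of _ "int k"]) auto
      qed simp
    next
      case False
      show ?thesis
      proof (cases "k - 1 = b")
        case True
        show ?thesis
        proof (cases b)
          case (Suc b')
          then have "?g b' = int b" by simp
          then show ?thesis using mem[of b'] Suc True False by (intro disjI2 bexI[of _ "int b"]) auto
        qed (use True False in simp)
      next
        case F2: False
        then have "?g (k - 1) = int (k - 1)" using False by simp
        then show ?thesis using mem[of "k - 1"] F2 False by (intro disjI2 bexI[of _ "int (k - 1)"]) auto
      qed
    qed
  qed
qed

lemma hsg_props:
  assumes "b < d" "\<bar>v\<bar> \<le> int b" "\<not> B \<Longrightarrow> v \<ge> 1"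
  shows "can B (hsg d b v)" "length (hsg d b v) = d" "mx (hsg d b v) = d - 1"
    "flatc (hsg d b v) = {x \<in> ambient d. x b = of_int (sgn v) * x (nat \<bar>v\<bar> - 1)}"
proof -
  let ?g = "\<lambda>k. if k < b then int k + 1 else if k = b then v else int k"
  show cn: "can B (hsg d b v)" unfolding hsg_def
  proof (rule can_map_upt)
    fix k assume k: "k < d"
    show "allowed B (mx (map ?g [0..<k])) (?g k)"
      unfolding hsg_prefix_mx[OF less_imp_le[OF k] assms(1,2)]
      using assms by (auto simp: allowed_def)
  qed
  show "length (hsg d b v) = d" by (simp add: hsg_def)
  have mxh: "mx (hsg d b v) = d - 1"
    unfolding hsg_def using hsg_prefix_mx[OF order.refl assms(1,2)] assms(1) by simp
  then show "mx (hsg d b v) = d - 1" .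
  have Lh: "Lc (hsg d b v) y i = (if i < d then (if i < b then y i else if i = b then of_int (sgn v) * y (nat \<bar>v\<bar> - 1)
       else y (i - 1)) else 0)" for y i
    by (auto simp: Lc_def hsg_def nat_diff_distrib)
  show "flatc (hsg d b v) = {x \<in> ambient d. x b = of_int (sgn v) * x (nat \<bar>v\<bar> - 1)}"
  proof
    show "flatc (hsg d b v) \<subseteq> {x \<in> ambient d. x b = of_int (sgn v) * x (nat \<bar>v\<bar> - 1)}"
    proof
      fix x assume "x \<in> flatc (hsg d b v)"
      then obtain y where y: "x = Lc (hsg d b v) y" unfolding flatc_def by auto
      have "x \<in> ambient d" using Lc_amb[of "hsg d b v" y] y by (simp add: hsg_def)
      moreover have "x b = of_int (sgn v) * x (nat \<bar>v\<bar> - 1)"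
      proof (cases "v = 0")
        case True then show ?thesis using y Lh assms by simp
      next
        case False
        then have "nat \<bar>v\<bar> - 1 < b" using assms by linarith
        then show ?thesis using y Lh assms by simp
      qed
      ultimately show "x \<in> {x \<in> ambient d. x b = of_int (sgn v) * x (nat \<bar>v\<bar> - 1)}" by simp
    qed
  next
    show "{x \<in> ambient d. x b = of_int (sgn v) * x (nat \<bar>v\<bar> - 1)} \<subseteq> flatc (hsg d b v)"
    proof
      fix x assume x: "x \<in> {x \<in> ambient d. x b = of_int (sgn v) * x (nat \<bar>v\<bar> - 1)}"
      define y where "y = (\<lambda>k. if k < b then x k else if k < d - 1 then x (k + 1) else 0)"
      have ya: "y \<in> ambient (mx (hsg d b v))" unfolding mxh y_def ambient_def using assms(1) by auto
      have "Lc (hsg d b v) y = x"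
      proof
        fix i
        show "Lc (hsg d b v) y i = x i"
        proof (cases "i < d")
          case False then show ?thesis using x by (simp add: Lh ambient_def)
        next
          case True
          show ?thesis
          proof (cases "i < b")
            case True then show ?thesis using \<open>i < d\<close> by (simp add: Lh y_def)
          next
            case False
            show ?thesis
            proof (cases "i = b")
              case True
              show ?thesis
              proof (cases "v = 0")
                case True then show ?thesis using x \<open>i = b\<close> \<open>i < d\<close> Lh[of y b] by simp
              next
                case False
                then have "nat \<bar>v\<bar> - 1 < b" using assms by linarith
                then show ?thesis using x \<open>i = b\<close> \<open>i < d\<close> by (simp add: Lh y_def)
              qed
            next
              case False
              then have i1: "\<not> i - 1 < b" "i - 1 < d - 1" "i - 1 + 1 = i" using \<open>\<not> i < b\<close> \<open>i < d\<close> by auto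
              have "Lc (hsg d b v) y i = y (i - 1)" using False \<open>\<not> i < b\<close> \<open>i < d\<close> by (simp add: Lh)
              also have "\<dots> = x (i - 1 + 1)" using i1(1,2) unfolding y_def by simp
              finally show ?thesis using i1(3) by simp
            qed
          qed
        qed
      qed
      then show "x \<in> flatc (hsg d b v)" using ya unfolding flatc_def by force
    qed
  qed
qed

lemma hyp_string:
  assumes "H \<in> arr B d"
  shows "\<exists>h. can B h \<and> length h = d \<and> mx h = d - 1 \<and> flatc h = H"
proof -
  have A: "\<exists>h. can B h \<and> length h = d \<and> mx h = d - 1 \<and> flatc h = {x \<in> ambient d. x b = of_int (sgn v) * x (nat \<bar>v\<bar> - 1)}"
    if "b < d" "\<bar>v\<bar> \<le> int b" "\<not> B \<Longrightarrow> v \<ge> 1" for b v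
    using hsg_props(1)[OF that] hsg_props(2)[OF that] hsg_props(3)[OF that] hsg_props(4)[OF that]
    by (intro exI[of _ "hsg d b v"]) simp
  from assms[unfolded arr_iff] show ?thesis
  proof (elim disjE exE conjE)
    fix a b assume ab: "a < b" "b < d" and H: "H = heq d a b"
    have "{x \<in> ambient d. x b = of_int (sgn (int a + 1)) * x (nat \<bar>int a + 1\<bar> - 1)} = H"
      unfolding H heq_def by auto
    moreover have "\<exists>h. can B h \<and> length h = d \<and> mx h = d - 1 \<and> flatc h = {x \<in> ambient d. x b = of_int (sgn (int a + 1)) * x (nat \<bar>int a + 1\<bar> - 1)}"
      by (rule A) (use ab in auto)
    ultimately show ?thesis by metis
  next
    fix a b assume ab: "a < b" "b < d" and H: "B" "H = hng d a b"
    have "{x \<in> ambient d. x b = of_int (sgn (- int a - 1)) * x (nat \<bar>- int a - 1\<bar> - 1)} = H"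
      unfolding H hng_def by (auto simp: nat_diff_distrib)
    moreover have "\<exists>h. can B h \<and> length h = d \<and> mx h = d - 1 \<and> flatc h = {x \<in> ambient d. x b = of_int (sgn (- int a - 1)) * x (nat \<bar>- int a - 1\<bar> - 1)}"
      by (rule A) (use ab H in auto)
    ultimately show ?thesis by metis
  next
    fix a assume a: "B" "a < d" "H = hz d a"
    have "{x \<in> ambient d. x a = of_int (sgn (0::int)) * x (nat \<bar>0::int\<bar> - 1)} = H"
      unfolding a hz_def by auto
    moreover have "\<exists>h. can B h \<and> length h = d \<and> mx h = d - 1 \<and> flatc h = {x \<in> ambient d. x a = of_int (sgn (0::int)) * x (nat \<bar>0::int\<bar> - 1)}"
      by (rule A) (use a in auto)
    ultimately show ?thesis by metis
  qed
qed

definition idc :: "nat \<Rightarrow> int list" where "idc d = map (\<lambda>k. int k + 1) [0..<d]"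

lemma idc_props: "can B (idc d)" "length (idc d) = d" "mx (idc d) = d" "flatc (idc d) = ambient d"
proof -
  have mxk: "mx (map (\<lambda>k. int k + 1) [0..<k]) = k" for k
  proof (rule mx_eqI)
    show "\<forall>x\<in>set (map (\<lambda>k. int k + 1) [0..<k]). nat \<bar>x\<bar> \<le> k" by auto
    show "k = 0 \<or> (\<exists>x\<in>set (map (\<lambda>k. int k + 1) [0..<k]). nat \<bar>x\<bar> = k)"
    proof (cases k)
      case (Suc k')
      then have "int k' + 1 \<in> set (map (\<lambda>k. int k + 1) [0..<k])" by auto
      then show ?thesis using Suc by (intro disjI2 bexI[of _ "int k' + 1"]) auto
    qed simp
  qed
  show "can B (idc d)" unfolding idc_def by (rule can_map_upt) (simp add: mxk allowed_def)
  show "length (idc d) = d" by (simp add: idc_def)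
  show mxd: "mx (idc d) = d" by (simp add: idc_def mxk)
  have L: "y \<in> ambient d \<Longrightarrow> Lc (idc d) y = y" for y
    by (auto simp: Lc_def idc_def ambient_def fun_eq_iff)
  show "flatc (idc d) = ambient d" unfolding flatc_def mxd using L by force
qed

lemma vs_fscale: "vector_space fscale"
  by (unfold_locales) (auto simp: fscale_def fun_eq_iff algebra_simps)

interpretation F: vector_space fscale by (rule vs_fscale)

lemma fscale_apply: "fscale c x i = c * x i" by (simp add: fscale_def)

lemma sum_fun_apply: "finite A \<Longrightarrow> (\<Sum>a\<in>A. (f a :: pt)) i = (\<Sum>a\<in>A. f a i)"
  by (induction A rule: finite_induct) auto

lemma ambient_subspace: "F.subspace (ambient d)"
  by (auto simp: F.subspace_def ambient_def fscale_apply)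

lemma Lc_hom: "module_hom fscale fscale (Lc c)"
proof -
  have "module fscale" using vs_fscale by (simp add: module_iff_vector_space)
  then show ?thesis
    by (auto simp: module_hom_def module_hom_axioms_def Lc_def fun_eq_iff algebra_simps fscale_apply)
qed

lemma dim_image_inj:
  assumes "module_hom fscale fscale f" "inj_on f (F.span S)"
  shows "F.dim (f ` S) = F.dim S"
proof -
  interpret L: module_hom fscale fscale f by fact
  obtain Bs where B: "Bs \<subseteq> S" "F.independent Bs" "S \<subseteq> F.span Bs" "card Bs = F.dim S"
    by (rule F.basis_exists)
  have sp: "F.span S = F.span Bs"
    using B F.span_mono[of Bs S] F.span_mono[of S "F.span Bs"] F.span_span[of Bs] by auto
  have ind: "F.independent (f ` Bs)"
    by (rule L.independent_injective_image) (use B assms(2) sp in auto)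
  have "F.span (f ` Bs) = F.span (f ` S)" by (simp add: L.span_image sp)
  then have "F.dim (f ` S) = card (f ` Bs)" using ind by (rule F.dim_eq_card)
  also have "\<dots> = card Bs"
    by (rule card_image, rule inj_on_subset[OF assms(2)]) (use B F.span_superset in auto)
  finally show ?thesis using B by simp
qed

definition ev :: "nat \<Rightarrow> pt" where "ev k = (\<lambda>i. if i = k then 1 else 0)"

lemma dim_ambient: "F.dim (ambient d) = d"
proof (rule F.dim_unique)
  let ?E = "ev ` {..<d}"
  show "?E \<subseteq> ambient d" by (auto simp: ev_def ambient_def)
  show "ambient d \<subseteq> F.span ?E"
  proof
    fix x assume x: "x \<in> ambient d"
    have "x = (\<Sum>k<d. fscale (x k) (ev k))"
    proof
      fix i
      have "(\<Sum>k<d. fscale (x k) (ev k)) i = (\<Sum>k<d. if i = k then x k else 0)"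
        by (simp add: sum_fun_apply fscale_apply ev_def if_distrib cong: if_cong)
      also have "\<dots> = x i" using x by (simp add: ambient_def)
      finally show "x i = (\<Sum>k<d. fscale (x k) (ev k)) i" by simp
    qed
    also have "\<dots> \<in> F.span ?E"
      by (intro F.span_sum F.span_scale F.span_base) auto
    finally show "x \<in> F.span ?E" .
  qed
  show "F.independent ?E"
    unfolding F.independent_explicit_module
  proof (intro allI impI)
    fix t u v assume t: "finite t" "t \<subseteq> ?E" and s: "(\<Sum>v\<in>t. fscale (u v) v) = 0" and v: "v \<in> t"
    then obtain k where k: "v = ev k" "k < d" by auto
    have "0 = (\<Sum>w\<in>t. fscale (u w) w) k" using s by simp
    also have "\<dots> = (\<Sum>w\<in>t. u w * w k)" using t by (simp add: sum_fun_apply fscale_apply)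
    also have "\<dots> = (\<Sum>w\<in>{v}. u w * w k)"
    proof (rule sum.mono_neutral_right)
      show "\<forall>i\<in>t - {v}. u i * i k = 0"
      proof
        fix w assume "w \<in> t - {v}"
        then obtain k' where "w = ev k'" "k' \<noteq> k" using t k by auto
        then show "u w * w k = 0" by (simp add: ev_def)
      qed
    qed (use t v in auto)
    also have "\<dots> = u v" using k by (simp add: ev_def)
    finally show "u v = 0" by simp
  qed
  show "card ?E = d"
    by (subst card_image) (auto simp: inj_on_def ev_def fun_eq_iff split: if_splits)
qed

lemma Lc_inj:
  assumes "can B c"
  shows "inj_on (Lc c) (ambient (mx c))"
proof
  fix y y' assume y: "y \<in> ambient (mx c)" and y': "y' \<in> ambient (mx c)" and eq: "Lc c y = Lc c y'"
  show "y = y'"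
  proof
    fix k
    show "y k = y' k"
    proof (cases "k < mx c")
      case True
      then obtain i where i: "i < length c" "c ! i = int (k + 1)"
        using can_occurs[OF assms, of "k + 1"] by auto
      have "Lc c y i = y k" "Lc c y' i = y' k" using i by (auto simp: Lc_def)
      then show ?thesis using eq by metis
    next
      case False
      then show ?thesis using y y' by (simp add: ambient_def)
    qed
  qed
qed

lemma dim_Lc_image:
  assumes "can B c" "S \<subseteq> ambient (mx c)"
  shows "F.dim (Lc c ` S) = F.dim S"
proof (rule dim_image_inj[OF Lc_hom])
  have "F.span S \<subseteq> ambient (mx c)"
    using F.span_mono[OF assms(2)] ambient_subspace F.span_eq_iff by blast
  then show "inj_on (Lc c) (F.span S)" using Lc_inj[OF assms(1)] inj_on_subset by blast
qed

lemma dim_flatc: "can B c \<Longrightarrow> F.dim (flatc c) = mx c"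
  unfolding flatc_def using dim_Lc_image[of B c "ambient (mx c)"] dim_ambient by simp

abbreviation FL :: "bool \<Rightarrow> nat \<Rightarrow> pt set set" where "FL B m \<equiv> flats m (arr B m)"

definition CanS :: "bool \<Rightarrow> nat \<Rightarrow> int list set" where "CanS B m = {c. can B c \<and> length c = m}"

definition pre :: "int list \<Rightarrow> pt set \<Rightarrow> pt set" where "pre c H = {y \<in> ambient (mx c). Lc c y \<in> H}"

lemma Lc_at: "i < length c \<Longrightarrow> Lc c y i = of_int (sgn (c ! i)) * y (nat \<bar>c ! i\<bar> - 1)"
  by (simp add: Lc_def)

lemma sgn_in: "(of_int (sgn (a::int)) :: real) \<in> {-1, 0, 1}"
  by (cases "a > 0"; cases "a = 0") auto

lemma p_lt: "i < length c \<Longrightarrow> c ! i \<noteq> 0 \<Longrightarrow> nat \<bar>c ! i\<bar> - 1 < mx c"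
  using mx_nth[of i c] by linarith

lemma pre_in:
  assumes c: "can B c" and H: "H \<in> arr B (length c)"
  shows "pre c H \<in> insert (ambient (mx c)) (arr B (mx c))"
proof -
  let ?d = "mx c"
  let ?s = "\<lambda>i. (of_int (sgn (c ! i)) :: real)"
  let ?p = "\<lambda>i. nat \<bar>c ! i\<bar> - 1"
  have A: "\<not> B \<Longrightarrow> ?s i = 1" if "i < length c" for i
    using can_pos[OF _ that] c by (cases B) auto
  have pl: "?s i \<noteq> 0 \<Longrightarrow> ?p i < ?d" if "i < length c" for i
    using p_lt[OF that] by (cases "c ! i = 0") auto
  have LA: "Lc c y \<in> ambient (length c)" for y by (rule Lc_amb)
  from H[unfolded arr_iff] show ?thesis
  proof (elim disjE exE conjE)
    fix i j assume ij: "i < j" "j < length c" and H: "H = heq (length c) i j"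
    have "pre c H = {y \<in> ambient ?d. ?s i * y (?p i) = ?s j * y (?p j)}"
      unfolding pre_def H heq_def using ij LA by (auto simp: Lc_at)
    also have "\<dots> \<in> insert (ambient ?d) (arr B ?d)"
      by (rule pair_set[OF sgn_in sgn_in]) (use ij pl A in auto)
    finally show ?thesis .
  next
    fix i j assume ij: "i < j" "j < length c" and H: "B" "H = hng (length c) i j"
    have "pre c H = {y \<in> ambient ?d. ?s i * y (?p i) = (- ?s j) * y (?p j)}"
      unfolding pre_def H hng_def using ij LA by (auto simp: Lc_at)
    also have "\<dots> \<in> insert (ambient ?d) (arr B ?d)"
    proof (rule pair_set[OF sgn_in])
      show "- ?s j \<in> {-1, 0, 1}" using sgn_in[of "c ! j"] by auto
    qed (use ij pl H in auto)
    finally show ?thesis .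
  next
    fix i assume i: "B" "i < length c" "H = hz (length c) i"
    have "pre c H = {y \<in> ambient ?d. ?s i * y (?p i) = 0 * y 0}"
      unfolding pre_def i hz_def using i LA by (auto simp: Lc_at)
    also have "\<dots> \<in> insert (ambient ?d) (arr B ?d)"
      by (rule pair_set[OF sgn_in]) (use i pl in auto)
    finally show ?thesis .
  qed
qed

lemma pre_surj:
  assumes c: "can B c" and H': "H' \<in> arr B (mx c)"
  shows "\<exists>H \<in> arr B (length c). H' = pre c H"
proof -
  let ?d = "mx c"
  have LA: "Lc c y \<in> ambient (length c)" for y by (rule Lc_amb)
  have occ: "\<exists>i<length c. c ! i = int (a + 1)" if "a < ?d" for a
    using can_occurs[OF c, of "a + 1"] that by auto
  have rel: "pre c {x \<in> ambient (length c). x i = of_int s * x j} = {y \<in> ambient ?d. y a = of_int s * y b}"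
    if "i < length c" "j < length c" "c ! i = int (a + 1)" "c ! j = int (b + 1)" for i j a b s
    unfolding pre_def using that LA by (auto simp: Lc_at)
  from H'[unfolded arr_iff] show ?thesis
  proof (elim disjE exE conjE)
    fix a b assume ab: "a < b" "b < ?d" and H: "H' = heq ?d a b"
    have "a < ?d" "b < ?d" using ab by auto
    then obtain i j where i: "i < length c" "c ! i = int (a + 1)" and j: "j < length c" "c ! j = int (b + 1)"
      using occ by blast
    have "i \<noteq> j" using i j ab by auto
    then have "{x \<in> ambient (length c). x i = of_int 1 * x j} \<in> arr B (length c)"
      using arr_rel[of i j "length c" 1 B] i j by simp
    moreover have "H' = pre c {x \<in> ambient (length c). x i = of_int 1 * x j}"
      unfolding rel[OF i(1) j(1) i(2) j(2)] H heq_def by simp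
    ultimately show ?thesis by blast
  next
    fix a b assume ab: "a < b" "b < ?d" and H: "B" "H' = hng ?d a b"
    have "a < ?d" "b < ?d" using ab by auto
    then obtain i j where i: "i < length c" "c ! i = int (a + 1)" and j: "j < length c" "c ! j = int (b + 1)"
      using occ by blast
    have "i \<noteq> j" using i j ab by auto
    then have "{x \<in> ambient (length c). x i = of_int (-1) * x j} \<in> arr B (length c)"
      using arr_rel[of i j "length c" "-1" B] i j H by simp
    moreover have "H' = pre c {x \<in> ambient (length c). x i = of_int (-1) * x j}"
      unfolding rel[OF i(1) j(1) i(2) j(2)] H hng_def by simp
    ultimately show ?thesis by blast
  next
    fix a assume a: "B" "a < ?d" "H' = hz ?d a"
    obtain i where i: "i < length c" "c ! i = int (a + 1)" using occ a(2) by blast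
    have "hz (length c) i \<in> arr B (length c)" using hz_in[of B i "length c"] a i by simp
    moreover have "H' = pre c (hz (length c) i)"
      unfolding pre_def a hz_def using i LA by (auto simp: Lc_at)
    ultimately show ?thesis by blast
  qed
qed

lemma flatc_closure:
  assumes c: "can B c"
  shows "flatc c = ambient (length c) \<inter> \<Inter>{H \<in> arr B (length c). flatc c \<subseteq> H}"
proof
  show "flatc c \<subseteq> ambient (length c) \<inter> \<Inter>{H \<in> arr B (length c). flatc c \<subseteq> H}"
    using flatc_sub by auto
next
  let ?d = "mx c" and ?m = "length c"
  show "ambient ?m \<inter> \<Inter>{H \<in> arr B ?m. flatc c \<subseteq> H} \<subseteq> flatc c"
  proof
    fix x assume x: "x \<in> ambient ?m \<inter> \<Inter>{H \<in> arr B ?m. flatc c \<subseteq> H}"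
    then have xa: "x \<in> ambient ?m" and xH: "\<And>H. H \<in> arr B ?m \<Longrightarrow> flatc c \<subseteq> H \<Longrightarrow> x \<in> H" by auto
    define fi where "fi k = (LEAST i. i < ?m \<and> c ! i = int (k + 1))" for k
    have fi: "fi k < ?m \<and> c ! fi k = int (k + 1)" if "k < ?d" for k
      unfolding fi_def
      by (rule LeastI_ex) (use can_occurs[OF c, of "k + 1"] that in auto)
    define y where "y k = (if k < ?d then x (fi k) else 0)" for k
    have ya: "y \<in> ambient ?d" by (simp add: y_def ambient_def)
    have "Lc c y = x"
    proof
      fix i
      show "Lc c y i = x i"
      proof (cases "i < ?m")
        case False then show ?thesis using xa by (simp add: Lc_def ambient_def)
      next
        case im: True
        show ?thesis
        proof (cases "c ! i = 0")
          case True
          then have B: B using can_pos[of c i] c im by (cases B) auto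
          have "flatc c \<subseteq> hz ?m i"
            using True flatc_sub[of c] by (auto simp: flatc_def hz_def Lc_at im)
          then have "x i = 0" using xH[OF hz_in[OF B im]] by (simp add: hz_def)
          then show ?thesis using True im by (simp add: Lc_at)
        next
          case False
          define k where "k = nat \<bar>c ! i\<bar> - 1"
          have k: "k < ?d" using p_lt[OF im False] by (simp add: k_def)
          define j where "j = fi k"
          have j: "j < ?m" "c ! j = int (k + 1)" using fi[OF k] by (auto simp: j_def)
          define s where "s = sgn (c ! i)"
          have ci: "c ! i = s * int (k + 1)" using False by (auto simp: s_def k_def sgn_if)
          have Lci: "Lc c y' i = of_int s * y' k" for y' using im by (simp add: Lc_at s_def k_def)
          have Lcj: "Lc c y' j = y' k" for y' using j by (simp add: Lc_at)
          show ?thesis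
          proof (cases "i = j")
            case True
            then have "s = 1" using ci j by (auto simp: s_def)
            then show ?thesis using Lci[of y] True k by (simp add: y_def j_def)
          next
            case ij: False
            have s: "s = 1 \<or> (B \<and> s = -1)"
              using False can_pos[of c i] c im by (cases B) (auto simp: s_def sgn_if)
            have "of_int s = (1::real) \<or> (B \<and> of_int s = (-1::real))" using s by auto
            then have R: "{x \<in> ambient ?m. x i = of_int s * x j} \<in> arr B ?m"
              using arr_rel[OF ij im j(1)] by blast
            have "flatc c \<subseteq> {x \<in> ambient ?m. x i = of_int s * x j}"
              using flatc_sub[of c] by (auto simp: flatc_def Lci Lcj)
            then have "x i = of_int s * x j" using xH[OF R] by auto
            then show ?thesis using Lci[of y] k by (simp add: y_def j_def)
          qed
        qed
      qed
    qed
    then show "x \<in> flatc c" using ya unfolding flatc_def by blast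
  qed
qed

lemma flatc_in_FL: "can B c \<Longrightarrow> flatc c \<in> FL B (length c)"
  unfolding flats_def using flatc_closure[of B c] by blast

lemma Lc_image_pre: "Lc c ` {y \<in> ambient (mx c). \<forall>H\<in>S. Lc c y \<in> H} = flatc c \<inter> \<Inter>S"
  unfolding flatc_def by auto

lemma restrict_FL:
  assumes c: "can B c"
  shows "{C \<in> FL B (length c). C \<subseteq> flatc c} = (\<lambda>C'. Lc c ` C') ` FL B (mx c)"
proof
  let ?m = "length c" and ?d = "mx c"
  show "{C \<in> FL B ?m. C \<subseteq> flatc c} \<subseteq> (\<lambda>C'. Lc c ` C') ` FL B ?d"
  proof
    fix C assume "C \<in> {C \<in> FL B ?m. C \<subseteq> flatc c}"
    then obtain S where S: "S \<subseteq> arr B ?m" "C = ambient ?m \<inter> \<Inter>S" and Cs: "C \<subseteq> flatc c"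
      unfolding flats_def by auto
    define S' where "S' = (pre c ` S) - {ambient ?d}"
    have S'a: "S' \<subseteq> arr B ?d" using pre_in[OF c] S(1) by (auto simp: S'_def)
    have C'eq: "ambient ?d \<inter> \<Inter>S' = {y \<in> ambient ?d. \<forall>H\<in>S. Lc c y \<in> H}"
      unfolding S'_def pre_def by auto
    have "C = flatc c \<inter> \<Inter>S" using Cs S(2) flatc_sub[of c] by auto
    also have "\<dots> = Lc c ` (ambient ?d \<inter> \<Inter>S')" unfolding C'eq Lc_image_pre ..
    finally have "C = Lc c ` (ambient ?d \<inter> \<Inter>S')" .
    moreover have "ambient ?d \<inter> \<Inter>S' \<in> FL B ?d" unfolding flats_def using S'a by blast
    ultimately show "C \<in> (\<lambda>C'. Lc c ` C') ` FL B ?d" by blast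
  qed
next
  let ?m = "length c" and ?d = "mx c"
  show "(\<lambda>C'. Lc c ` C') ` FL B ?d \<subseteq> {C \<in> FL B ?m. C \<subseteq> flatc c}"
  proof
    fix C assume "C \<in> (\<lambda>C'. Lc c ` C') ` FL B ?d"
    then obtain T where T: "T \<subseteq> arr B ?d" "C = Lc c ` (ambient ?d \<inter> \<Inter>T)"
      unfolding flats_def by auto
    have "\<forall>t\<in>T. \<exists>H. H \<in> arr B ?m \<and> t = pre c H" using pre_surj[OF c] T(1) by blast
    then obtain Hf where Hf: "\<And>t. t \<in> T \<Longrightarrow> Hf t \<in> arr B ?m \<and> t = pre c (Hf t)" by metis
    have eq1: "ambient ?d \<inter> \<Inter>T = {y \<in> ambient ?d. \<forall>H\<in>Hf ` T. Lc c y \<in> H}"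
    proof -
      have "y \<in> t \<longleftrightarrow> Lc c y \<in> Hf t" if "t \<in> T" "y \<in> ambient ?d" for t y
        using Hf[OF that(1)] that(2) unfolding pre_def by blast
      then show ?thesis by auto
    qed
    have Ceq: "C = flatc c \<inter> \<Inter>(Hf ` T)" unfolding T(2) eq1 Lc_image_pre ..
    obtain S0 where S0: "S0 \<subseteq> arr B ?m" "flatc c = ambient ?m \<inter> \<Inter>S0"
      using flatc_in_FL[OF c] unfolding flats_def by auto
    have "C = ambient ?m \<inter> \<Inter>(S0 \<union> Hf ` T)" unfolding Ceq S0(2) by auto
    moreover have "S0 \<union> Hf ` T \<subseteq> arr B ?m" using S0(1) Hf by auto
    ultimately have "C \<in> FL B ?m" unfolding flats_def by blast
    moreover have "C \<subseteq> flatc c" using Ceq by auto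
    ultimately show "C \<in> {C \<in> FL B ?m. C \<subseteq> flatc c}" by blast
  qed
qed

lemma FL_char: "FL B m = flatc ` CanS B m"
proof
  show "flatc ` CanS B m \<subseteq> FL B m" using flatc_in_FL by (auto simp: CanS_def)
next
  have main: "finite S \<Longrightarrow> S \<subseteq> arr B m \<Longrightarrow> \<exists>c. can B c \<and> length c = m \<and> ambient m \<inter> \<Inter>S = flatc c" for S
  proof (induction S rule: finite_induct)
    case empty
    show ?case by (rule exI[of _ "idc m"]) (simp add: idc_props)
  next
    case (insert H S)
    then obtain c where c: "can B c" "length c = m" "ambient m \<inter> \<Inter>S = flatc c" by auto
    have H: "H \<in> arr B (length c)" using insert c by auto
    have "ambient m \<inter> \<Inter>(insert H S) = (ambient m \<inter> \<Inter>S) \<inter> H" by blast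
    also have "\<dots> = flatc c \<inter> H" using c(3) by simp
    also have "\<dots> = Lc c ` pre c H" using Lc_image_pre[of c "{H}"] unfolding pre_def by simp
    finally have eq: "ambient m \<inter> \<Inter>(insert H S) = Lc c ` pre c H" .
    from pre_in[OF c(1) H] show ?case
    proof
      assume "pre c H = ambient (mx c)"
      then have "ambient m \<inter> \<Inter>(insert H S) = flatc c" using eq by (simp add: flatc_def)
      then show ?thesis using c(1,2) by blast
    next
      assume "pre c H \<in> arr B (mx c)"
      then obtain h where h: "can B h" "length h = mx c" "mx h = mx c - 1" "flatc h = pre c H"
        using hyp_string by blast
      have lc: "can B (lcomp c h) \<and> mx (lcomp c h) = mx (take (mx c) h)"
        using lcomp_can[OF c(1) h(1)] h(2) by simp
      have mxe: "mx (lcomp c h) = mx h" using lc h(2) by simp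
      have LL: "Lc c (Lc h y) = Lc (lcomp c h) y" for y using Lc_comp[of c h] h(2) by simp
      have "Lc c ` pre c H = Lc c ` Lc h ` ambient (mx h)" unfolding h(4)[symmetric] flatc_def ..
      also have "\<dots> = Lc (lcomp c h) ` ambient (mx h)" unfolding image_image LL ..
      also have "\<dots> = flatc (lcomp c h)" unfolding flatc_def mxe ..
      finally have "ambient m \<inter> \<Inter>(insert H S) = flatc (lcomp c h)" using eq by simp
      moreover have "length (lcomp c h) = m" using c(2) by (simp add: lcomp_def)
      ultimately show ?thesis using lc by blast
    qed
  qed
  show "FL B m \<subseteq> flatc ` CanS B m"
  proof
    fix X assume "X \<in> FL B m"
    then obtain S where S: "S \<subseteq> arr B m" "X = ambient m \<inter> \<Inter>S" unfolding flats_def by auto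
    have "finite S" using S(1) arr_finite finite_subset by blast
    from main[OF this S(1)] obtain c where "can B c" "length c = m" "ambient m \<inter> \<Inter>S = flatc c" by blast
    then have "can B c" "length c = m" "X = flatc c" using S(2) by auto
    then show "X \<in> flatc ` CanS B m" by (auto simp: CanS_def)
  qed
qed

lemma ev_amb: "k < d \<Longrightarrow> ev k \<in> ambient d" by (simp add: ev_def ambient_def)

lemma flatc_zero:
  assumes c: "can B c" and i: "i < length c"
  shows "(\<forall>x\<in>flatc c. x i = 0) \<longleftrightarrow> c ! i = 0"
proof
  assume "c ! i = 0" then show "\<forall>x\<in>flatc c. x i = 0" using i by (auto simp: flatc_def Lc_at)
next
  assume z: "\<forall>x\<in>flatc c. x i = 0"
  show "c ! i = 0"
  proof (rule ccontr)
    assume nz: "c ! i \<noteq> 0"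
    have "Lc c (ev (nat \<bar>c ! i\<bar> - 1)) \<in> flatc c"
      unfolding flatc_def using ev_amb[OF p_lt[OF i nz]] by blast
    then have "Lc c (ev (nat \<bar>c ! i\<bar> - 1)) i = 0" using z by blast
    then show False using nz i by (simp add: Lc_at ev_def sgn_0_0)
  qed
qed

lemma flatc_rel:
  assumes c: "can B c" and i: "i < length c" and j: "j < length c" and nzi: "c ! i \<noteq> 0" and nzj: "c ! j \<noteq> 0"
    and s: "s = 1 \<or> s = -1"
  shows "(\<forall>x\<in>flatc c. x i = of_int s * x j) \<longleftrightarrow> c ! i = s * c ! j"
proof
  assume e: "c ! i = s * c ! j"
  have "nat \<bar>c ! i\<bar> = nat \<bar>c ! j\<bar>" using e s by (auto simp: abs_mult)
  moreover have "sgn (c ! i) = s * sgn (c ! j)" using e s by (auto simp: sgn_mult)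
  ultimately show "\<forall>x\<in>flatc c. x i = of_int s * x j"
    using i j by (auto simp: flatc_def Lc_at)
next
  assume r: "\<forall>x\<in>flatc c. x i = of_int s * x j"
  define p where "p = nat \<bar>c ! i\<bar> - 1"
  define q where "q = nat \<bar>c ! j\<bar> - 1"
  have "Lc c (ev p) \<in> flatc c"
    unfolding flatc_def using ev_amb[OF p_lt[OF i nzi]] by (auto simp: p_def)
  then have "Lc c (ev p) i = of_int s * Lc c (ev p) j" using r by blast
  then have e: "of_int (sgn (c ! i)) = (of_int s * of_int (sgn (c ! j)) * (if q = p then 1 else 0) :: real)"
    using i j by (simp add: Lc_at ev_def p_def q_def)
  have qp: "q = p"
  proof (rule ccontr)
    assume "q \<noteq> p"
    then have "(of_int (sgn (c ! i)) :: real) = 0" using e by simp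
    then show False using nzi by (simp add: sgn_0_0)
  qed
  have "nat \<bar>c ! i\<bar> = nat \<bar>c ! j\<bar>" using qp nzi nzj unfolding p_def q_def by arith
  then have ab: "\<bar>c ! i\<bar> = \<bar>c ! j\<bar>" by (simp add: eq_nat_nat_iff)
  have "(of_int (sgn (c ! i)) :: real) = of_int (s * sgn (c ! j))" using e qp by simp
  then have sg: "sgn (c ! i) = s * sgn (c ! j)" by (simp only: of_int_eq_iff)
  have "c ! i = sgn (c ! i) * \<bar>c ! i\<bar>" by (simp add: sgn_mult_abs)
  also have "\<dots> = s * (sgn (c ! j) * \<bar>c ! j\<bar>)" using sg ab by simp
  also have "\<dots> = s * c ! j" by (simp add: sgn_mult_abs)
  finally show "c ! i = s * c ! j" .
qed

lemma old_case:
  assumes c: "can B c" and c': "can B c'" and len: "length c = length c'" and eq: "flatc c = flatc c'"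
    and i: "i < length c" and tk: "take i c = take i c'"
    and old: "c ! i = 0 \<or> (c ! i \<noteq> 0 \<and> nat \<bar>c ! i\<bar> \<le> mx (take i c))"
  shows "c' ! i = c ! i"
proof -
  have i': "i < length c'" using i len by simp
  show ?thesis
  proof (cases "c ! i = 0")
    case True
    then have "\<forall>x\<in>flatc c'. x i = 0" using flatc_zero[OF c i] eq by simp
    then show ?thesis using flatc_zero[OF c' i'] True by simp
  next
    case False
    then have k: "1 \<le> nat \<bar>c ! i\<bar>" "nat \<bar>c ! i\<bar> \<le> mx (take i c)" using old by auto
    obtain j where j: "j < length (take i c)" "take i c ! j = int (nat \<bar>c ! i\<bar>)"
      using can_occurs[OF can_take[OF c] k] by blast
    have ji: "j < i" using j(1) by simp
    have cj: "c ! j = \<bar>c ! i\<bar>" using j ji by simp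
    have c'j: "c' ! j = c ! j" using tk ji by (metis nth_take)
    define s where "s = sgn (c ! i)"
    have s: "s = 1 \<or> s = -1" using False by (auto simp: s_def sgn_if)
    have ci: "c ! i = s * c ! j" using cj by (simp add: s_def abs_sgn mult.commute)
    have nzj: "c ! j \<noteq> 0" using cj False by simp
    have jl: "j < length c" "j < length c'" using ji i i' by auto
    have r: "\<forall>x\<in>flatc c. x i = of_int s * x j" using flatc_rel[OF c i jl(1) False nzj s] ci by simp
    have nzi': "c' ! i \<noteq> 0"
    proof
      assume "c' ! i = 0"
      then have "\<forall>x\<in>flatc c. x i = 0" using flatc_zero[OF c' i'] eq by simp
      then show False using flatc_zero[OF c i] False by simp
    qed
    have "c' ! i = s * c' ! j"
      using flatc_rel[OF c' i' jl(2) nzi'] r eq c'j nzj s by auto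
    then show ?thesis using ci c'j by simp
  qed
qed

lemma allowed_cases: "allowed B M a \<Longrightarrow> a = int M + 1 \<or> a = 0 \<or> (a \<noteq> 0 \<and> nat \<bar>a\<bar> \<le> M)"
  unfolding allowed_def by (cases B) auto

lemma flatc_inj: "inj_on flatc (CanS B m)"
proof
  fix c c' assume cS: "c \<in> CanS B m" and c'S: "c' \<in> CanS B m" and eq: "flatc c = flatc c'"
  have c: "can B c" "length c = m" and c': "can B c'" "length c' = m" using cS c'S by (auto simp: CanS_def)
  have "\<forall>j<i. c ! j = c' ! j" if "i \<le> m" for i
    using that
  proof (induction i)
    case 0 then show ?case by simp
  next
    case (Suc i)
    then have IH: "\<forall>j<i. c ! j = c' ! j" and im: "i < m" by auto
    have tk: "take i c = take i c'"
    proof (rule nth_equalityI)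
      show "length (take i c) = length (take i c')" using c c' by simp
      fix j assume "j < length (take i c)"
      then show "take i c ! j = take i c' ! j" using IH by simp
    qed
    have a1: "allowed B (mx (take i c)) (c ! i)" using c(1)[unfolded can_nth_iff] im c(2) by blast
    have a2': "allowed B (mx (take i c')) (c' ! i)" using c'(1)[unfolded can_nth_iff] im c'(2) by blast
    then have a2: "allowed B (mx (take i c)) (c' ! i)" using tk by simp
    have "c ! i = c' ! i"
    proof (cases "c ! i = int (mx (take i c)) + 1")
      case True
      show ?thesis
      proof (cases "c' ! i = int (mx (take i c)) + 1")
        case True then show ?thesis using \<open>c ! i = int (mx (take i c)) + 1\<close> by simp
      next
        case False
        then have "c' ! i = 0 \<or> (c' ! i \<noteq> 0 \<and> nat \<bar>c' ! i\<bar> \<le> mx (take i c'))"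
          using allowed_cases[OF a2] tk by auto
        moreover have "length c' = length c" "i < length c'" using c c' im by auto
        ultimately show ?thesis
          using old_case[OF c'(1) c(1) _ eq[symmetric] _ tk[symmetric]] by metis
      qed
    next
      case False
      then have "c ! i = 0 \<or> (c ! i \<noteq> 0 \<and> nat \<bar>c ! i\<bar> \<le> mx (take i c))"
        using allowed_cases[OF a1] by auto
      moreover have "length c = length c'" "i < length c" using c c' im by auto
      ultimately show ?thesis
        using old_case[OF c(1) c'(1) _ eq _ tk] by metis
    qed
    then show ?case using IH less_Suc_eq by auto
  qed
  then show "c = c'" using c c' by (intro nth_equalityI) auto
qed

fun mu_f :: "nat \<Rightarrow> 'a set set \<Rightarrow> 'a set \<Rightarrow> 'a set \<Rightarrow> int" where
  "mu_f 0 P a b = 0"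
| "mu_f (Suc n) P a b = (if a \<in> P \<and> b \<in> P then (if a = b then 1 else if a \<subseteq> b then
      - (\<Sum>c\<in>{c \<in> P. a \<subseteq> c \<and> c \<subseteq> b \<and> c \<noteq> b}. mu_f n P a c) else 0) else 0)"

definition hgt :: "'a set set \<Rightarrow> 'a set \<Rightarrow> nat" where
  "hgt P b = card {c \<in> P. c \<subset> b}"

lemma hgt_less: assumes "finite P" "c \<in> P" "c \<subset> b" shows "hgt P c < hgt P b"
  unfolding hgt_def
proof (rule psubset_card_mono)
  show "finite {c \<in> P. c \<subset> b}" using assms by auto
  show "{ca \<in> P. ca \<subset> c} \<subset> {c \<in> P. c \<subset> b}" using assms by auto
qed

lemma mu_f_stab:
  assumes "finite P"
  shows "hgt P b < n \<Longrightarrow> hgt P b < n' \<Longrightarrow> mu_f n P a b = mu_f n' P a b"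
proof (induction n arbitrary: n' b)
  case 0 then show ?case by simp
next
  case (Suc k)
  then obtain k' where k': "n' = Suc k'" by (cases n') auto
  have "(\<Sum>c\<in>{c \<in> P. a \<subseteq> c \<and> c \<subseteq> b \<and> c \<noteq> b}. mu_f k P a c)
      = (\<Sum>c\<in>{c \<in> P. a \<subseteq> c \<and> c \<subseteq> b \<and> c \<noteq> b}. mu_f k' P a c)"
  proof (rule sum.cong[OF refl])
    fix c assume c: "c \<in> {c \<in> P. a \<subseteq> c \<and> c \<subseteq> b \<and> c \<noteq> b}"
    then have "hgt P c < hgt P b" using hgt_less[OF assms] by auto
    then show "mu_f k P a c = mu_f k' P a c" using Suc k' by (intro Suc.IH) auto
  qed
  then show ?case using k' by simp
qed

lemma mobius_eq:
  assumes "finite P"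
  shows "mobius P (\<subseteq>) a b = (if a \<in> P \<and> b \<in> P then (if a = b then 1 else if a \<subseteq> b then
      - (\<Sum>c\<in>{c \<in> P. a \<subseteq> c \<and> c \<subseteq> b \<and> c \<noteq> b}. mobius P (\<subseteq>) a c) else 0) else 0)"
proof -
  define M where "M = (\<lambda>a b. mu_f (Suc (card P)) P a b)"
  have hb: "hgt P b \<le> card P" for b unfolding hgt_def using assms by (intro card_mono) auto
  have M_eq: "\<forall>a b. M a b = (if a \<in> P \<and> b \<in> P then (if a = b then 1 else if a \<subseteq> b then
      - (\<Sum>c\<in>{c \<in> P. a \<subseteq> c \<and> c \<subseteq> b \<and> c \<noteq> b}. M a c) else 0) else 0)"
  proof (intro allI)
    fix a b
    have "(\<Sum>c\<in>{c \<in> P. a \<subseteq> c \<and> c \<subseteq> b \<and> c \<noteq> b}. mu_f (card P) P a c)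
      = (\<Sum>c\<in>{c \<in> P. a \<subseteq> c \<and> c \<subseteq> b \<and> c \<noteq> b}. M a c)"
    proof (rule sum.cong[OF refl])
      fix c assume c: "c \<in> {c \<in> P. a \<subseteq> c \<and> c \<subseteq> b \<and> c \<noteq> b}"
      then have "hgt P c < hgt P b" using hgt_less[OF assms] by auto
      then show "mu_f (card P) P a c = M a c" unfolding M_def
        using hb[of b] by (intro mu_f_stab[OF assms]) auto
    qed
    moreover have "M a b = (if a \<in> P \<and> b \<in> P then (if a = b then 1 else if a \<subseteq> b then
      - (\<Sum>c\<in>{c \<in> P. a \<subseteq> c \<and> c \<subseteq> b \<and> c \<noteq> b}. mu_f (card P) P a c) else 0) else 0)"
      unfolding M_def by (rule mu_f.simps(2))
    ultimately show "M a b = (if a \<in> P \<and> b \<in> P then (if a = b then 1 else if a \<subseteq> b then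
      - (\<Sum>c\<in>{c \<in> P. a \<subseteq> c \<and> c \<subseteq> b \<and> c \<noteq> b}. M a c) else 0) else 0)"
      by simp
  qed
  have uniq: "mu = M" if mu_eq: "\<forall>a b. mu a b = (if a \<in> P \<and> b \<in> P then (if a = b then 1 else if (\<subseteq>) a b then
      - (\<Sum>c\<in>{c \<in> P. (\<subseteq>) a c \<and> (\<subseteq>) c b \<and> c \<noteq> b}. mu a c) else 0) else 0)" for mu
  proof -
    have "mu a b = M a b" for a b
    proof (induction b rule: measure_induct_rule[where f = "hgt P"])
      case (less b)
      have "(\<Sum>c\<in>{c \<in> P. a \<subseteq> c \<and> c \<subseteq> b \<and> c \<noteq> b}. mu a c)
          = (\<Sum>c\<in>{c \<in> P. a \<subseteq> c \<and> c \<subseteq> b \<and> c \<noteq> b}. M a c)"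
        by (rule sum.cong[OF refl]) (auto intro!: less.IH hgt_less[OF assms])
      then show ?case using mu_eq[rule_format, of a b] M_eq[rule_format, of a b] by (simp only:)
    qed
    then show ?thesis by (intro ext)
  qed
  have "mobius P (\<subseteq>) = M"
    unfolding mobius_def
    apply (rule the_equality)
     apply (rule M_eq)
    apply (erule uniq)
    done
  then show ?thesis using M_eq by simp
qed

definition AS :: "bool \<Rightarrow> nat \<Rightarrow> int set" where "AS B d = {a. allowed B d a}"

lemma AS_eq: "AS B d = insert (int d + 1) (if B then {- int d .. int d} else {1 .. int d})"
  unfolding AS_def allowed_def by (cases B) auto

lemma AS_finite: "finite (AS B d)" unfolding AS_eq by auto

lemma CanS_0: "CanS B 0 = {[]}" by (auto simp: CanS_def can.can_Nil)

lemma CanS_Suc: "CanS B (Suc m) = (\<lambda>(c, a). c @ [a]) ` (SIGMA c:CanS B m. AS B (mx c))"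
proof
  show "CanS B (Suc m) \<subseteq> (\<lambda>(c, a). c @ [a]) ` (SIGMA c:CanS B m. AS B (mx c))"
  proof
    fix x assume "x \<in> CanS B (Suc m)"
    then have x: "can B x" "length x = Suc m" by (auto simp: CanS_def)
    then obtain c a where xa: "x = c @ [a]" by (metis length_Suc_conv_rev)
    then have "can B c" "allowed B (mx c) a" "length c = m" using x by (auto simp: can_snoc_iff)
    then show "x \<in> (\<lambda>(c, a). c @ [a]) ` (SIGMA c:CanS B m. AS B (mx c))"
      using xa by (auto simp: CanS_def AS_def)
  qed
  show "(\<lambda>(c, a). c @ [a]) ` (SIGMA c:CanS B m. AS B (mx c)) \<subseteq> CanS B (Suc m)"
    by (auto simp: CanS_def AS_def intro: can.can_snoc)
qed

lemma CanS_finite: "finite (CanS B m)"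
  by (induction m) (auto simp: CanS_0 CanS_Suc AS_finite)

lemma sum_CanS_Suc:
  "(\<Sum>c\<in>CanS B (Suc m). F c) = (\<Sum>c\<in>CanS B m. \<Sum>a\<in>AS B (mx c). F (c @ [a]))"
proof -
  have inj: "inj_on (\<lambda>(c, a). c @ [a]) (SIGMA c:CanS B m. AS B (mx c))"
    by (auto simp: inj_on_def)
  have "(\<Sum>c\<in>CanS B (Suc m). F c) = (\<Sum>x\<in>(SIGMA c:CanS B m. AS B (mx c)). F ((\<lambda>(c, a). c @ [a]) x))"
    unfolding CanS_Suc by (rule sum.reindex[OF inj, unfolded comp_def])
  also have "\<dots> = (\<Sum>(c, a)\<in>(SIGMA c:CanS B m. AS B (mx c)). F (c @ [a]))"
    by (rule sum.cong) auto
  also have "\<dots> = (\<Sum>c\<in>CanS B m. \<Sum>a\<in>AS B (mx c). F (c @ [a]))"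
    by (rule sum.Sigma[symmetric]) (auto simp: CanS_finite AS_finite)
  finally show ?thesis .
qed

definition nold :: "bool \<Rightarrow> nat \<Rightarrow> nat" where "nold B d = (if B then 2 * d + 1 else d)"

lemma sum_AS:
  fixes G :: "nat \<Rightarrow> 'a::comm_ring_1"
  shows "(\<Sum>a\<in>AS B d. G (max d (nat \<bar>a\<bar>))) = of_nat (nold B d) * G d + G (Suc d)"
proof -
  let ?O = "(if B then {- int d .. int d} else {1 .. int d})"
  have nin: "int d + 1 \<notin> ?O" by auto
  have fin: "finite ?O" by auto
  have "(\<Sum>a\<in>AS B d. G (max d (nat \<bar>a\<bar>))) = G (max d (nat \<bar>int d + 1\<bar>)) + (\<Sum>a\<in>?O. G (max d (nat \<bar>a\<bar>)))"
    unfolding AS_eq by (rule sum.insert[OF fin nin])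
  also have "(\<Sum>a\<in>?O. G (max d (nat \<bar>a\<bar>))) = (\<Sum>a\<in>?O. G d)"
    by (rule sum.cong) (auto split: if_splits)
  also have "\<dots> = of_nat (card ?O) * G d" by simp
  also have "card ?O = nold B d" by (auto simp: nold_def)
  also have "G (max d (nat \<bar>int d + 1\<bar>)) = G (Suc d)" by (simp add: max_def)
  finally show ?thesis by (simp add: add.commute)
qed

lemma sum_CanS_Suc_mx:
  fixes G :: "nat \<Rightarrow> 'a::comm_ring_1"
  shows "(\<Sum>c\<in>CanS B (Suc m). G (mx c)) = (\<Sum>c\<in>CanS B m. of_nat (nold B (mx c)) * G (mx c) + G (Suc (mx c)))"
  unfolding sum_CanS_Suc by (simp add: sum_AS)

fun dfB :: "nat \<Rightarrow> nat" where
  "dfB 0 = 1"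
| "dfB (Suc d) = (2 * d + 1) * dfB d"

lemma dfB_pos: "dfB d > 0" by (induction d) auto

definition fg :: "bool \<Rightarrow> nat \<Rightarrow> int" where
  "fg B d = (if B then (-1) ^ d * int (dfB d) else (-1) ^ (d - 1) * int (fact (d - 1)))"

lemma fg_nz: "fg B d \<noteq> 0"
  using dfB_pos[of d] by (auto simp: fg_def)

definition ind :: "bool \<Rightarrow> nat \<Rightarrow> int" where
  "ind B d = (if B then (if d = 0 then 1 else 0) else (if d \<le> 1 then 1 else 0))"

lemma fg_sum: "(\<Sum>c\<in>CanS B m. fg B (mx c)) = ind B m"
proof (cases m)
  case 0 then show ?thesis by (simp add: CanS_0 fg_def ind_def)
next
  case (Suc m')
  have "(\<Sum>c\<in>CanS B (Suc m'). fg B (mx c)) = (\<Sum>c\<in>CanS B m'. of_nat (nold B (mx c)) * fg B (mx c) + fg B (Suc (mx c)))"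
    by (rule sum_CanS_Suc_mx)
  also have "\<dots> = (\<Sum>c\<in>CanS B m'. (if B then 0 else (if mx c = 0 then 1 else 0)))"
  proof (rule sum.cong[OF refl])
    fix c assume "c \<in> CanS B m'"
    show "of_nat (nold B (mx c)) * fg B (mx c) + fg B (Suc (mx c)) = (if B then 0 else (if mx c = 0 then 1 else 0))"
    proof (cases B)
      case True then show ?thesis by (simp add: nold_def fg_def algebra_simps)
    next
      case False
      show ?thesis
      proof (cases "mx c")
        case 0 then show ?thesis using False by (simp add: nold_def fg_def)
      next
        case (Suc e)
        then show ?thesis using False by (simp add: nold_def fg_def algebra_simps)
      qed
    qed
  qed
  also have "\<dots> = ind B (Suc m')"
  proof (cases B)
    case True then show ?thesis by (simp add: ind_def)
  next
    case False
    show ?thesis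
    proof (cases m')
      case 0 then show ?thesis using False by (simp add: CanS_0 ind_def)
    next
      case (Suc m'')
      have nz: "mx c \<noteq> 0" if "c \<in> CanS B m'" for c
      proof -
        have c: "can False c" "length c = m'" using that False by (auto simp: CanS_def)
        have "c ! 0 \<ge> 1" using can_pos[OF c(1)] c(2) Suc by simp
        then have "nat \<bar>c ! 0\<bar> \<ge> 1" by simp
        moreover have "nat \<bar>c ! 0\<bar> \<le> mx c" using mx_nth[of 0 c] c(2) Suc by simp
        ultimately show ?thesis by simp
      qed
      have "(\<Sum>c\<in>CanS B m'. (if B then 0 else (if mx c = 0 then 1 else 0))) = (\<Sum>c\<in>CanS B m'. (0::int))"
        by (rule sum.cong[OF refl]) (simp add: nz)
      then show ?thesis using False Suc by (simp add: ind_def)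
    qed
  qed
  finally show ?thesis using Suc by simp
qed

lemma FL_finite: "finite (FL B m)"
  unfolding FL_char by (rule finite_imageI[OF CanS_finite])

lemma bot_in: "flat_bot m (arr B m) \<in> FL B m"
  unfolding flat_bot_def flats_def by blast

lemma bot_le: "C \<in> FL B m \<Longrightarrow> flat_bot m (arr B m) \<subseteq> C"
  unfolding flat_bot_def flats_def by blast

lemma FL_sub: "C \<in> FL B m \<Longrightarrow> C \<subseteq> ambient m"
  unfolding flats_def by blast

lemma KS:
  assumes X: "X \<in> FL B m"
  shows "(\<Sum>C\<in>{C \<in> FL B m. C \<subseteq> X}. fg B (F.dim C)) = ind B (F.dim X)"
proof -
  obtain c where c: "can B c" "length c = m" "X = flatc c"
    using X unfolding FL_char CanS_def by blast
  let ?d = "mx c"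
  have inj: "inj_on (\<lambda>C'. Lc c ` C') (FL B ?d)"
  proof
    fix C1 C2 assume C: "C1 \<in> FL B ?d" "C2 \<in> FL B ?d" and e: "Lc c ` C1 = Lc c ` C2"
    show "C1 = C2"
      using inj_on_image_eq_iff[OF Lc_inj[OF c(1)] FL_sub[OF C(1)] FL_sub[OF C(2)]] e by simp
  qed
  have "(\<Sum>C\<in>{C \<in> FL B m. C \<subseteq> X}. fg B (F.dim C)) = (\<Sum>C\<in>(\<lambda>C'. Lc c ` C') ` FL B ?d. fg B (F.dim C))"
    using restrict_FL[OF c(1)] c(2,3) by simp
  also have "\<dots> = (\<Sum>C'\<in>FL B ?d. fg B (F.dim (Lc c ` C')))"
    by (subst sum.reindex[OF inj]) simp
  also have "\<dots> = (\<Sum>C'\<in>FL B ?d. fg B (F.dim C'))"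
    by (rule sum.cong[OF refl]) (simp add: dim_Lc_image[OF c(1) FL_sub])
  also have "\<dots> = (\<Sum>c'\<in>CanS B ?d. fg B (F.dim (flatc c')))"
    unfolding FL_char by (subst sum.reindex[OF flatc_inj]) simp
  also have "\<dots> = (\<Sum>c'\<in>CanS B ?d. fg B (mx c'))"
    by (rule sum.cong[OF refl]) (auto simp: dim_flatc[of B] CanS_def)
  also have "\<dots> = ind B ?d" by (rule fg_sum)
  finally show ?thesis using c dim_flatc by metis
qed

lemma small_is_bot:
  assumes X: "X \<in> FL B m" and i: "ind B (F.dim X) \<noteq> 0"
  shows "X = flat_bot m (arr B m)"
proof -
  obtain c where c: "can B c" "length c = m" "X = flatc c"
    using X unfolding FL_char CanS_def by blast
  have d: "ind B (mx c) \<noteq> 0" using i dim_flatc[OF c(1)] c(3) by simp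
  have "H \<notin> arr B (mx c)" for H
    using d unfolding arr_iff ind_def by (auto split: if_splits)
  then have empty: "arr B (mx c) = {}" by blast
  have "X \<subseteq> H" if H: "H \<in> arr B m" for H
  proof -
    have "pre c H = ambient (mx c)" using pre_in[OF c(1)] H c(2) empty by auto
    then show ?thesis unfolding c(3) flatc_def pre_def by blast
  qed
  then have "X \<subseteq> flat_bot m (arr B m)" using FL_sub[OF X] unfolding flat_bot_def by blast
  then show ?thesis using bot_le[OF X] by blast
qed

lemma mu_val:
  assumes "X \<in> FL B m"
  shows "mobius (FL B m) (\<subseteq>) (flat_bot m (arr B m)) X = fg B (F.dim X)"
  using assms
proof (induction X rule: measure_induct_rule[where f = "hgt (FL B m)"])
  case (less X)
  let ?P = "FL B m" and ?b = "flat_bot m (arr B m)"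
  have fin: "finite ?P" by (rule FL_finite)
  note eq = mobius_eq[OF fin, of ?b X]
  show ?case
  proof (cases "X = ?b")
    case True
    have "{C \<in> ?P. C \<subseteq> X} = {X}" using True bot_le less.prems by blast
    then have "fg B (F.dim X) = ind B (F.dim X)" using KS[OF less.prems] by simp
    then have "fg B (F.dim X) = 1" using fg_nz[of B "F.dim X"] by (auto simp: ind_def split: if_splits)
    then show ?thesis using eq True bot_in by simp
  next
    case False
    have sub: "?b \<subseteq> X" using bot_le[OF less.prems] .
    have S: "{c \<in> ?P. ?b \<subseteq> c \<and> c \<subseteq> X \<and> c \<noteq> X} = {C \<in> ?P. C \<subseteq> X} - {X}"
      using bot_le by blast
    have "(\<Sum>c\<in>{c \<in> ?P. ?b \<subseteq> c \<and> c \<subseteq> X \<and> c \<noteq> X}. mobius ?P (\<subseteq>) ?b c)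
        = (\<Sum>c\<in>{C \<in> ?P. C \<subseteq> X} - {X}. fg B (F.dim c))"
      unfolding S
    proof (rule sum.cong[OF refl])
      fix C assume C: "C \<in> {C \<in> ?P. C \<subseteq> X} - {X}"
      then have "hgt ?P C < hgt ?P X" using hgt_less[OF fin] by blast
      then show "mobius ?P (\<subseteq>) ?b C = fg B (F.dim C)" using less.IH C by blast
    qed
    also have "\<dots> = ind B (F.dim X) - fg B (F.dim X)"
      using KS[OF less.prems] less.prems fin
      by (subst sum_diff1) auto
    also have "ind B (F.dim X) = 0" using small_is_bot[OF less.prems] False by blast
    finally show ?thesis using eq False sub less.prems bot_in by simp
  qed
qed

definition wp :: "real poly" where "wp = [:-1, 1:]"

lemma arr_poly_eq:
  "arr_poly m (arr B m) = (\<Sum>c\<in>CanS B m. smult (real_of_int \<bar>fg B (mx c)\<bar>) (wp ^ (m - mx c)))"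
proof -
  have "arr_poly m (arr B m) = (\<Sum>X\<in>FL B m. smult (real_of_int \<bar>fg B (F.dim X)\<bar>) (wp ^ (m - F.dim X)))"
    unfolding arr_poly_def codim_def wp_def
    by (rule sum.cong[OF refl]) (simp add: mu_val)
  also have "\<dots> = (\<Sum>c\<in>CanS B m. smult (real_of_int \<bar>fg B (F.dim (flatc c))\<bar>) (wp ^ (m - F.dim (flatc c))))"
    unfolding FL_char by (subst sum.reindex[OF flatc_inj]) simp
  also have "\<dots> = (\<Sum>c\<in>CanS B m. smult (real_of_int \<bar>fg B (mx c)\<bar>) (wp ^ (m - mx c)))"
    by (rule sum.cong[OF refl]) (auto simp: dim_flatc[of B] CanS_def)
  finally show ?thesis .
qed

lemma pderiv_sum: "pderiv (sum f A) = (\<Sum>x\<in>A. pderiv (f x))"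
  by (induction A rule: infinite_finite_induct) (auto simp: pderiv_add)

lemma pderiv_ofnat_mult: "pderiv (of_nat c * p) = of_nat c * pderiv p"
  by (simp add: pderiv_mult)

lemma pderiv_wp: "pderiv wp = 1"
  by (simp add: wp_def pderiv_pCons)

lemma wp_pd: "wp * pderiv (wp ^ k) = of_nat k * wp ^ k"
proof (cases k)
  case 0 then show ?thesis by simp
next
  case (Suc k')
  have "pderiv (wp ^ Suc k') = smult (of_nat (Suc k')) (wp ^ k')"
    by (simp only: pderiv_power_Suc pderiv_wp mult_1_right)
  then have "wp * pderiv (wp ^ Suc k') = of_nat (Suc k') * wp ^ Suc k'"
    by (simp only: mult_smult_right of_nat_mult_conv_smult power_Suc)
  then show ?thesis using Suc by simp
qed

definition TB :: "nat \<Rightarrow> nat \<Rightarrow> real poly" where "TB m d = of_nat (dfB d) * wp ^ (m - d)"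
definition TA :: "nat \<Rightarrow> nat \<Rightarrow> real poly" where "TA m d = of_nat (fact (d - 1)) * wp ^ (m - d)"
definition QB :: "nat \<Rightarrow> real poly" where "QB m = (\<Sum>c\<in>CanS True m. TB m (mx c))"
definition QA :: "nat \<Rightarrow> real poly" where "QA m = (\<Sum>c\<in>CanS False m. TA m (mx c))"

lemma QB_arr: "arr_poly m (arr True m) = QB m"
  unfolding arr_poly_eq QB_def TB_def
  by (rule sum.cong[OF refl]) (simp add: fg_def abs_mult of_nat_mult_conv_smult)

lemma QA_arr: "arr_poly m (arr False m) = QA m"
  unfolding arr_poly_eq QA_def TA_def
  by (rule sum.cong[OF refl]) (simp add: fg_def abs_mult of_nat_mult_conv_smult del: of_nat_fact)

lemma mx_le_CanS: "c \<in> CanS B m \<Longrightarrow> mx c \<le> m"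
  using can_mx_le by (auto simp: CanS_def)

lemma mxA_pos: "c \<in> CanS False m \<Longrightarrow> m \<ge> 1 \<Longrightarrow> mx c \<ge> 1"
proof -
  assume "c \<in> CanS False m" "m \<ge> 1"
  then have c: "can False c" "length c = m" "0 < length c" by (auto simp: CanS_def)
  have "c ! 0 \<ge> 1" using can_pos[OF c(1) c(3)] .
  moreover have "nat \<bar>c ! 0\<bar> \<le> mx c" using mx_nth[OF c(3)] .
  ultimately show "mx c \<ge> 1" by simp
qed

lemma termB1:
  assumes "d \<le> m"
  shows "of_nat (nold True d) * TB (Suc m) d + TB (Suc m) (Suc d) = (wp + 1) * (of_nat (2 * d + 1) * TB m d)"
proof -
  have "Suc m - d = Suc (m - d)" using assms by simp
  then show ?thesis unfolding TB_def nold_def by (simp add: algebra_simps)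
qed

lemma termB2:
  assumes "d \<le> m"
  shows "of_nat (2 * m + 1) * TB m d - 2 * (wp * pderiv (TB m d)) = of_nat (2 * d + 1) * TB m d"
proof -
  have "wp * pderiv (TB m d) = of_nat (dfB d) * (of_nat (m - d) * wp ^ (m - d))"
    unfolding TB_def pderiv_ofnat_mult by (simp add: wp_pd[symmetric] algebra_simps)
  moreover have "(of_nat (2 * m + 1) :: real poly) = of_nat (2 * d + 1) + 2 * of_nat (m - d)"
  proof -
    have "2 * m + 1 = (2 * d + 1) + 2 * (m - d)" using assms by simp
    then show ?thesis by (metis of_nat_add of_nat_mult of_nat_numeral)
  qed
  ultimately show ?thesis unfolding TB_def by (simp add: algebra_simps)
qed

lemma ring_idA:
  fixes D F w W :: "'a::comm_ring_1"
  shows "D * (F * (w * W)) + (D * F) * W = (w + 1) * (D * (F * W))"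
  by (simp add: algebra_simps)

lemma termA1:
  assumes "1 \<le> d" "d \<le> m"
  shows "of_nat (nold False d) * TA (Suc m) d + TA (Suc m) (Suc d) = (wp + 1) * (of_nat d * TA m d)"
proof -
  have e1: "Suc m - d = Suc (m - d)" using assms by simp
  have e2: "Suc m - Suc d = m - d" by simp
  have "(fact d :: nat) = of_nat d * fact (d - 1)" using assms by (intro fact_reduce) simp
  then have e3: "fact (Suc d - 1) = d * fact (d - 1)" by simp
  have e4: "nold False d = d" by (simp add: nold_def)
  show ?thesis unfolding TA_def e1 e2 e3 e4 of_nat_mult power_Suc by (rule ring_idA)
qed

lemma termA2:
  assumes "d \<le> m"
  shows "of_nat m * TA m d - wp * pderiv (TA m d) = of_nat d * TA m d"
proof -
  have "wp * pderiv (TA m d) = of_nat (fact (d - 1)) * (of_nat (m - d) * wp ^ (m - d))"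
    unfolding TA_def pderiv_ofnat_mult by (simp add: wp_pd[symmetric] algebra_simps)
  moreover have "(of_nat m :: real poly) = of_nat d + of_nat (m - d)"
    using assms by (metis le_add_diff_inverse of_nat_add)
  ultimately show ?thesis unfolding TA_def by (simp add: algebra_simps)
qed

lemma recB: "QB (Suc m) = (wp + 1) * (of_nat (2 * m + 1) * QB m - 2 * (wp * pderiv (QB m)))"
proof -
  have "QB (Suc m) = (\<Sum>c\<in>CanS True m. \<Sum>a\<in>AS True (mx c). TB (Suc m) (max (mx c) (nat \<bar>a\<bar>)))"
    unfolding QB_def sum_CanS_Suc by simp
  also have "\<dots> = (\<Sum>c\<in>CanS True m. (wp + 1) * (of_nat (2 * mx c + 1) * TB m (mx c)))"
  proof (rule sum.cong[OF refl])
    fix c assume "c \<in> CanS True m"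
    then have "mx c \<le> m" by (rule mx_le_CanS)
    then show "(\<Sum>a\<in>AS True (mx c). TB (Suc m) (max (mx c) (nat \<bar>a\<bar>))) = (wp + 1) * (of_nat (2 * mx c + 1) * TB m (mx c))"
      by (simp only: sum_AS termB1)
  qed
  also have "\<dots> = (\<Sum>c\<in>CanS True m. (wp + 1) * (of_nat (2 * m + 1) * TB m (mx c) - 2 * (wp * pderiv (TB m (mx c)))))"
  proof (rule sum.cong[OF refl])
    fix c assume "c \<in> CanS True m"
    then have "mx c \<le> m" by (rule mx_le_CanS)
    then show "(wp + 1) * (of_nat (2 * mx c + 1) * TB m (mx c)) = (wp + 1) * (of_nat (2 * m + 1) * TB m (mx c) - 2 * (wp * pderiv (TB m (mx c))))"
      by (simp only: termB2)
  qed
  also have "\<dots> = (wp + 1) * (of_nat (2 * m + 1) * QB m - 2 * (wp * pderiv (QB m)))"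
  proof -
    have "of_nat (2 * m + 1) * QB m - 2 * (wp * pderiv (QB m)) = (\<Sum>c\<in>CanS True m. of_nat (2 * m + 1) * TB m (mx c) - 2 * (wp * pderiv (TB m (mx c))))"
      unfolding QB_def pderiv_sum sum_distrib_left sum_subtractf ..
    then show ?thesis by (simp only: sum_distrib_left)
  qed
  finally show ?thesis .
qed

lemma recA:
  assumes "m \<ge> 1"
  shows "QA (Suc m) = (wp + 1) * (of_nat m * QA m - wp * pderiv (QA m))"
proof -
  have "QA (Suc m) = (\<Sum>c\<in>CanS False m. \<Sum>a\<in>AS False (mx c). TA (Suc m) (max (mx c) (nat \<bar>a\<bar>)))"
    unfolding QA_def sum_CanS_Suc by simp
  also have "\<dots> = (\<Sum>c\<in>CanS False m. (wp + 1) * (of_nat (mx c) * TA m (mx c)))"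
  proof (rule sum.cong[OF refl])
    fix c assume c: "c \<in> CanS False m"
    then have "mx c \<le> m" by (rule mx_le_CanS)
    moreover have "1 \<le> mx c" using mxA_pos[OF c assms] .
    ultimately show "(\<Sum>a\<in>AS False (mx c). TA (Suc m) (max (mx c) (nat \<bar>a\<bar>))) = (wp + 1) * (of_nat (mx c) * TA m (mx c))"
      by (simp only: sum_AS termA1)
  qed
  also have "\<dots> = (\<Sum>c\<in>CanS False m. (wp + 1) * (of_nat m * TA m (mx c) - wp * pderiv (TA m (mx c))))"
  proof (rule sum.cong[OF refl])
    fix c assume "c \<in> CanS False m"
    then have "mx c \<le> m" by (rule mx_le_CanS)
    then show "(wp + 1) * (of_nat (mx c) * TA m (mx c)) = (wp + 1) * (of_nat m * TA m (mx c) - wp * pderiv (TA m (mx c)))"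
      by (simp only: termA2)
  qed
  also have "\<dots> = (wp + 1) * (of_nat m * QA m - wp * pderiv (QA m))"
  proof -
    have "of_nat m * QA m - wp * pderiv (QA m) = (\<Sum>c\<in>CanS False m. of_nat m * TA m (mx c) - wp * pderiv (TA m (mx c)))"
      unfolding QA_def pderiv_sum sum_distrib_left sum_subtractf ..
    then show ?thesis by (simp only: sum_distrib_left)
  qed
  finally show ?thesis .
qed

lemma QB_0: "QB 0 = 1" by (simp add: QB_def CanS_0 TB_def)

lemma QA_1: "QA 1 = 1"
proof -
  have "QA 1 = (\<Sum>c\<in>CanS False 0. \<Sum>a\<in>AS False (mx c). TA 1 (max (mx c) (nat \<bar>a\<bar>)))"
    unfolding QA_def One_nat_def sum_CanS_Suc by simp
  also have "\<dots> = 1" by (simp add: CanS_0 AS_eq TA_def)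
  finally show ?thesis .
qed

lemma leib:
  fixes X Y :: "nat \<Rightarrow> 'a::comm_ring_1"
  shows "(\<Sum>k\<le>Suc n. of_nat (Suc n choose k) * (X k * Y (Suc n - k)))
       = (\<Sum>k\<le>n. of_nat (n choose k) * (X (Suc k) * Y (n - k) + X k * Y (Suc (n - k))))"
proof -
  let ?S1 = "\<Sum>k\<le>n. of_nat (n choose k) * (X (Suc k) * Y (n - k))"
  let ?S2 = "\<Sum>k\<le>n. of_nat (n choose Suc k) * (X (Suc k) * Y (n - k))"
  have A: "(\<Sum>k\<le>Suc n. of_nat (Suc n choose k) * (X k * Y (Suc n - k))) = X 0 * Y (Suc n) + ?S1 + ?S2"
  proof -
    have "(\<Sum>k\<le>Suc n. of_nat (Suc n choose k) * (X k * Y (Suc n - k)))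
      = X 0 * Y (Suc n) + (\<Sum>k\<le>n. of_nat (Suc n choose Suc k) * (X (Suc k) * Y (n - k)))"
      by (subst sum.atMost_Suc_shift) simp
    also have "(\<Sum>k\<le>n. of_nat (Suc n choose Suc k) * (X (Suc k) * Y (n - k))) = ?S1 + ?S2"
      by (simp add: sum.distrib algebra_simps)
    finally show ?thesis by (simp add: add.assoc)
  qed
  have B: "X 0 * Y (Suc n) + ?S2 = (\<Sum>k\<le>n. of_nat (n choose k) * (X k * Y (Suc (n - k))))"
  proof -
    have "X 0 * Y (Suc n) + ?S2 = (\<Sum>k\<le>Suc n. of_nat (n choose k) * (X k * Y (Suc n - k)))"
      by (subst sum.atMost_Suc_shift) simp
    also have "\<dots> = (\<Sum>k\<le>n. of_nat (n choose k) * (X k * Y (Suc (n - k))))"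
      by (simp add: Suc_diff_le binomial_eq_0)
    finally show ?thesis .
  qed
  have "(\<Sum>k\<le>Suc n. of_nat (Suc n choose k) * (X k * Y (Suc n - k))) = ?S1 + (X 0 * Y (Suc n) + ?S2)"
    using A by (simp add: algebra_simps)
  also have "\<dots> = (\<Sum>k\<le>n. of_nat (n choose k) * (X (Suc k) * Y (n - k) + X k * Y (Suc (n - k))))"
    unfolding B by (simp add: sum.distrib distrib_left)
  finally show ?thesis .
qed

definition conv :: "nat \<Rightarrow> real poly" where
  "conv n = (\<Sum>k\<le>n. of_nat (n choose k) * (QB k * QB (n - k)))"

lemma ring_id1:
  fixes z a b P Q P' Q' w :: "'a::comm_ring_1"
  shows "(z * (a * P - 2 * (w * P'))) * Q + P * (z * (b * Q - 2 * (w * Q'))) = z * ((a + b) * (P * Q) - 2 * (w * (P * Q' + Q * P')))"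
  by (simp add: algebra_simps)

lemma conv_step_term:
  assumes "k \<le> n"
  shows "QB (Suc k) * QB (n - k) + QB k * QB (Suc (n - k))
       = (wp + 1) * (of_nat (2 * n + 2) * (QB k * QB (n - k)) - 2 * (wp * pderiv (QB k * QB (n - k))))"
proof -
  have e: "(of_nat (2 * n + 2) :: real poly) = of_nat (2 * k + 1) + of_nat (2 * (n - k) + 1)"
  proof -
    have "2 * n + 2 = (2 * k + 1) + (2 * (n - k) + 1)" using assms by simp
    then show ?thesis by (metis of_nat_add)
  qed
  show ?thesis unfolding recB[of k] recB[of "n - k"] e pderiv_mult by (rule ring_id1)
qed

lemma ring_id2:
  fixes C z c w X Y :: "'a::comm_ring_1"
  shows "C * (z * (c * X - 2 * (w * Y))) = z * (c * (C * X)) - z * (2 * (w * (C * Y)))"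
  by (simp add: algebra_simps)

lemma conv_rec: "conv (Suc n) = (wp + 1) * (of_nat (2 * n + 2) * conv n - 2 * (wp * pderiv (conv n)))"
proof -
  have "conv (Suc n) = (\<Sum>k\<le>n. of_nat (n choose k) * (QB (Suc k) * QB (n - k) + QB k * QB (Suc (n - k))))"
    unfolding conv_def by (rule leib)
  also have "\<dots> = (\<Sum>k\<le>n. of_nat (n choose k) * ((wp + 1) * (of_nat (2 * n + 2) * (QB k * QB (n - k)) - 2 * (wp * pderiv (QB k * QB (n - k))))))"
    by (rule sum.cong[OF refl]) (simp only: conv_step_term atMost_iff)
  also have "\<dots> = (\<Sum>k\<le>n. (wp + 1) * (of_nat (2 * n + 2) * (of_nat (n choose k) * (QB k * QB (n - k)))) -
       (wp + 1) * (2 * (wp * (of_nat (n choose k) * pderiv (QB k * QB (n - k))))))"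
    by (simp only: ring_id2)
  also have "\<dots> = (wp + 1) * (of_nat (2 * n + 2) * conv n) - (wp + 1) * (2 * (wp * pderiv (conv n)))"
    unfolding conv_def pderiv_sum pderiv_ofnat_mult sum_subtractf sum_distrib_left[symmetric] ..
  also have "\<dots> = (wp + 1) * (of_nat (2 * n + 2) * conv n - 2 * (wp * pderiv (conv n)))"
    by (simp only: right_diff_distrib)
  finally show ?thesis .
qed

lemma ring_id3:
  fixes z N S Q D w :: "'a::comm_ring_1"
  shows "z * ((2 * S) * (N * Q) - 2 * (w * (N * D))) = (2 * N) * (z * (S * Q - w * D))"
  by (simp add: algebra_simps)

lemma conv_eq: "conv n = of_nat (2 ^ n) * QA (Suc n)"
proof (induction n)
  case 0
  have "QA (Suc 0) = 1" using QA_1 by simp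
  then show ?case by (simp add: conv_def QB_0)
next
  case (Suc n)
  have e1: "(of_nat (2 * n + 2) :: real poly) = 2 * of_nat (Suc n)" by simp
  have e2: "(of_nat (2 ^ Suc n) :: real poly) = 2 * of_nat (2 ^ n)" by simp
  have "conv (Suc n) = (wp + 1) * (of_nat (2 * n + 2) * conv n - 2 * (wp * pderiv (conv n)))" by (rule conv_rec)
  also have "\<dots> = of_nat (2 ^ Suc n) * ((wp + 1) * (of_nat (Suc n) * QA (Suc n) - wp * pderiv (QA (Suc n))))"
    unfolding Suc pderiv_ofnat_mult e1 e2 by (rule ring_id3)
  also have "\<dots> = of_nat (2 ^ Suc n) * QA (Suc (Suc n))" by (subst recA) auto
  finally show ?case .
qed

theorem final:
  fixes n :: nat
  shows "(\<Sum>k\<le>n. smult (real (n choose k)) (arr_poly k (typeB_arr k) * arr_poly (n - k) (typeB_arr (n - k))))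
         = smult (2 ^ n) (arr_poly (n + 1) (braid_arr (n + 1)))"
proof -
  have tb: "typeB_arr k = arr True k" for k by (simp add: arr_def)
  have ba: "braid_arr k = arr False k" for k by (simp add: arr_def)
  have "(\<Sum>k\<le>n. smult (real (n choose k)) (arr_poly k (typeB_arr k) * arr_poly (n - k) (typeB_arr (n - k))))
      = conv n"
    unfolding conv_def tb QB_arr by (simp add: of_nat_mult_conv_smult)
  also have "\<dots> = of_nat (2 ^ n) * QA (Suc n)" by (rule conv_eq)
  also have "\<dots> = smult (2 ^ n) (arr_poly (n + 1) (braid_arr (n + 1)))"
    unfolding ba QA_arr using of_nat_mult_conv_smult[of "2 ^ n" "QA (Suc n)"] by simp
  finally show ?thesis .
qed

theorem proposition6p11:
  fixes n :: nat
  shows "(\<Sum>k\<le>n. smult (real (n choose k)) (arr_poly k (typeB_arr k) * arr_poly (n - k) (typeB_arr (n - k))))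
         = smult (2 ^ n) (arr_poly (n + 1) (braid_arr (n + 1)))"
    by (rule final)

end
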